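(* Let $G=(V,E)$ be a chordal graph on a non-empty finite vertex set $V$, and let $\{A_v\}_{v\in V}$ be events in a probability space. Then for every integer $r\ge 1$, \[ \sum_{I\in\mathscr{C}(G)} (-1)^{|I|-1}\,\Pr\Big(\bigcap_{i\in I} A_i\Big) \;\ge\; \sum_{\substack{I\in\mathscr{C}(G)\\ |I|\le 2r}} (-1)^{|I|-1}\,\Pr\Big(\bigcap_{i\in I} A_i\Big). \]
   Context: A graph is chordal if it contains no cycle of length four or more as an induced subgraph. $\mathscr{C}(G)$ denotes the clique complex of $G$: the set of all non-empty subsets $I\subseteq V$ whose elements are pairwise adjacent in $G$. *)

theory Defs
  imports "HOL-Probability.Probability"
begin

definition simple_graph :: "'a set \<Rightarrow> ('a \<Rightarrow> 'a \<Rightarrow> bool) \<Rightarrow> bool" where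
  "simple_graph V E \<longleftrightarrow> finite V \<and> (\<forall>x y. E x y \<longrightarrow> x \<in> V \<and> y \<in> V)
     \<and> (\<forall>x y. E x y \<longrightarrow> E y x) \<and> (\<forall>x. \<not> E x x)"

definition induced_cycle :: "'a set \<Rightarrow> ('a \<Rightarrow> 'a \<Rightarrow> bool) \<Rightarrow> 'a list \<Rightarrow> bool" where
  "induced_cycle V E cs \<longleftrightarrow> length cs \<ge> 4 \<and> distinct cs \<and> set cs \<subseteq> V
     \<and> (\<forall>i < length cs. E (cs ! i) (cs ! ((i + 1) mod length cs)))
     \<and> (\<forall>i < length cs. \<forall>j < length cs. E (cs ! i) (cs ! j) \<longrightarrow>
          j = (i + 1) mod length cs \<or> i = (j + 1) mod length cs)"

definition chordal :: "'a set \<Rightarrow> ('a \<Rightarrow> 'a \<Rightarrow> bool) \<Rightarrow> bool" where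
  "chordal V E \<longleftrightarrow> \<not> (\<exists>cs. induced_cycle V E cs)"

definition clique_complex :: "'a set \<Rightarrow> ('a \<Rightarrow> 'a \<Rightarrow> bool) \<Rightarrow> 'a set set" where
  "clique_complex V E = {I. I \<subseteq> V \<and> I \<noteq> {} \<and> (\<forall>x\<in>I. \<forall>y\<in>I. x \<noteq> y \<longrightarrow> E x y)}"

end

theory Submission
  imports Defs
begin


definition walk :: "('a \<Rightarrow> 'a \<Rightarrow> bool) \<Rightarrow> 'a list \<Rightarrow> bool" where
  "walk E ps \<longleftrightarrow> (\<forall>i. Suc i < length ps \<longrightarrow> E (ps!i) (ps!Suc i))"

lemma walk_take: "walk E ps \<Longrightarrow> walk E (take i ps)"
  unfolding walk_def by auto

lemma walk_drop: "walk E ps \<Longrightarrow> walk E (drop i ps)"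
  unfolding walk_def by auto

lemma walk_append:
  assumes "walk E xs" "walk E ys" "xs \<noteq> [] \<Longrightarrow> ys \<noteq> [] \<Longrightarrow> E (last xs) (hd ys)"
  shows "walk E (xs @ ys)"
  unfolding walk_def
proof (intro allI impI)
  fix i assume i: "Suc i < length (xs @ ys)"
  consider "Suc i < length xs" | "Suc i = length xs" | "i \<ge> length xs" by linarith
  then show "E ((xs @ ys) ! i) ((xs @ ys) ! Suc i)"
  proof cases
    case 1 then show ?thesis using assms(1) by (simp add: walk_def nth_append)
  next
    case 2
    then have "xs \<noteq> []" "ys \<noteq> []" using i by auto
    have "i = length xs - Suc 0" using 2 by simp
    moreover have "Suc i = length xs" by (fact 2)
    ultimately show ?thesis using assms(3) \<open>xs \<noteq> []\<close> \<open>ys \<noteq> []\<close>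
      by (simp add: nth_append last_conv_nth hd_conv_nth)
  next
    case 3
    then have "Suc (i - length xs) < length ys" using i by simp
    then show ?thesis using assms(2) 3 unfolding walk_def
      by (auto simp add: nth_append Suc_diff_le)
  qed
qed

lemma walk_snoc: "walk E xs \<Longrightarrow> (xs \<noteq> [] \<Longrightarrow> E (last xs) y) \<Longrightarrow> walk E (xs @ [y])"
  by (rule walk_append) (auto simp: walk_def)

lemma walk_Cons: "walk E xs \<Longrightarrow> (xs \<noteq> [] \<Longrightarrow> E y (hd xs)) \<Longrightarrow> walk E (y # xs)"
  using walk_append[of E "[y]" xs] by (auto simp: walk_def)

lemma walk_rev: assumes sym: "(\<And>a b. E a b \<Longrightarrow> E b a)" and w: "walk E xs" shows "walk E (rev xs)"
  unfolding walk_def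
proof (intro allI impI)
  fix i assume i: "Suc i < length (rev xs)"
  have "E (xs ! (length xs - Suc (Suc i))) (xs ! Suc (length xs - Suc (Suc i)))"
    using w i unfolding walk_def by simp
  moreover have "Suc (length xs - Suc (Suc i)) = length xs - Suc i" using i by simp
  ultimately have "E (rev xs ! Suc i) (rev xs ! i)" using i by (simp add: rev_nth)
  then show "E (rev xs ! i) (rev xs ! Suc i)" by (rule sym)
qed

lemma induced_path:
  assumes irr: "\<And>a. \<not> E a a" and sym: "\<And>a b. E a b \<Longrightarrow> E b a"
  shows "walk E ps \<Longrightarrow> ps \<noteq> [] \<Longrightarrow> hd ps = y \<Longrightarrow> last ps = z \<Longrightarrow>
     \<exists>qs. walk E qs \<and> qs \<noteq> [] \<and> hd qs = y \<and> last qs = z \<and> set qs \<subseteq> set ps \<and> distinct qs \<and>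
        (\<forall>i<length qs. \<forall>j<length qs. E (qs!i) (qs!j) \<longrightarrow> j = Suc i \<or> i = Suc j)"
proof (induction "length ps" arbitrary: ps rule: less_induct)
  case less
  show ?case
  proof (cases "distinct ps")
    case False
    then obtain i0 j0 where ij0: "i0 < length ps" "j0 < length ps" "i0 \<noteq> j0" "ps!i0 = ps!j0"
      by (auto simp: distinct_conv_nth)
    have "\<exists>i j. i < j \<and> j < length ps \<and> ps!i = ps!j"
    proof (cases "i0 < j0")
      case True then show ?thesis using ij0 by blast
    next
      case False then have "j0 < i0" using ij0(3) by simp
      then show ?thesis using ij0 by (intro exI[of _ j0] exI[of _ i0]) simp
    qed
    then obtain i j where ij: "i < j" "j < length ps" "ps!i = ps!j" by blast
    define ps' where "ps' = take i ps @ drop j ps"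
    have w: "walk E ps'" unfolding ps'_def
    proof (rule walk_append[OF walk_take[OF less(2)] walk_drop[OF less(2)]])
      assume "take i ps \<noteq> []"
      then have "i > 0" by auto
      then have "Suc (i - 1) < length ps" "Suc (i - 1) = i" using ij by auto
      then have "E (ps ! (i - 1)) (ps ! i)" using less(2) unfolding walk_def by metis
      moreover have "last (take i ps) = ps ! (i - 1)" using \<open>i > 0\<close> ij
        by (subst last_conv_nth) (auto simp: min_def)
      moreover have "hd (drop j ps) = ps ! i" using ij by (simp add: hd_drop_conv_nth)
      ultimately show "E (last (take i ps)) (hd (drop j ps))" by simp
    qed
    have l: "length ps' < length ps" using ij by (simp add: ps'_def)
    have ne: "ps' \<noteq> []" using ij by (simp add: ps'_def)
    have h: "hd ps' = y" using ij less(3,4)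
      by (cases i) (auto simp: ps'_def hd_drop_conv_nth hd_conv_nth nth_append)
    have la: "last ps' = z" using ij less(5) by (simp add: ps'_def)
    have s: "set ps' \<subseteq> set ps" unfolding ps'_def using set_take_subset set_drop_subset by fastforce
    from less(1)[OF l w ne h la] s show ?thesis by blast
  next
    case dist: True
    show ?thesis
    proof (cases "\<forall>i<length ps. \<forall>j<length ps. E (ps!i) (ps!j) \<longrightarrow> j = Suc i \<or> i = Suc j")
      case True then show ?thesis using less dist by blast
    next
      case False
      then obtain i0 j0 where ij0: "i0 < length ps" "j0 < length ps" "E (ps!i0) (ps!j0)" "j0 \<noteq> Suc i0" "i0 \<noteq> Suc j0"
        by blast
      have "i0 \<noteq> j0" using ij0(3) irr by metis
      have "\<exists>i j. Suc i < j \<and> j < length ps \<and> E (ps!i) (ps!j)"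
      proof (cases "i0 < j0")
        case True then show ?thesis using ij0 by (intro exI[of _ i0] exI[of _ j0]) simp
      next
        case False then have "j0 < i0" using \<open>i0 \<noteq> j0\<close> by simp
        moreover have "E (ps!j0) (ps!i0)" using sym[OF ij0(3)] .
        ultimately show ?thesis using ij0 by (intro exI[of _ j0] exI[of _ i0]) simp
      qed
      then obtain i j where ij: "Suc i < j" "j < length ps" "E (ps!i) (ps!j)" by blast
      define ps' where "ps' = take (Suc i) ps @ drop j ps"
      have w: "walk E ps'" unfolding ps'_def
      proof (rule walk_append[OF walk_take[OF less(2)] walk_drop[OF less(2)]])
        have "last (take (Suc i) ps) = ps ! i" using ij
          by (subst last_conv_nth) (auto simp: min_def)
        then show "E (last (take (Suc i) ps)) (hd (drop j ps))" using ij
          by (simp add: hd_drop_conv_nth)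
      qed
      have l: "length ps' < length ps" using ij by (simp add: ps'_def)
      have ne: "ps' \<noteq> []" using ij by (simp add: ps'_def)
      have h: "hd ps' = y" using ij less(3,4) by (simp add: ps'_def)
      have la: "last ps' = z" using ij less(5) by (simp add: ps'_def)
      have s: "set ps' \<subseteq> set ps" unfolding ps'_def using set_take_subset set_drop_subset by fastforce
      from less(1)[OF l w ne h la] s show ?thesis by blast
    qed
  qed
qed

lemma cycle_from_path:
  assumes irr: "\<And>a. \<not> E a a" and sym: "\<And>a b. E a b \<Longrightarrow> E b a"
  and w: "walk E qs" and ne: "qs \<noteq> []" and hd: "hd qs = y" and la: "last qs = z" and d: "distinct qs"
  and cl: "\<forall>i<length qs. \<forall>j<length qs. E (qs!i) (qs!j) \<longrightarrow> j = Suc i \<or> i = Suc j"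
  and yz: "y \<noteq> z" "\<not> E y z" and x: "x \<notin> set qs" "E x y" "E x z"
  and xn: "\<forall>w\<in>set qs. E x w \<longrightarrow> w = y \<or> w = z"
  and V: "set qs \<subseteq> V" "x \<in> V"
  shows "induced_cycle V E (x # qs)"
proof -
  define n where "n = length qs"
  have n1: "n \<noteq> 1"
  proof
    assume "n = 1" then obtain a where "qs = [a]" unfolding n_def by (cases qs) auto
    then show False using hd la yz by simp
  qed
  have n2: "n \<noteq> 2"
  proof
    assume "n = 2" then obtain a b where "qs = [a, b]" unfolding n_def
      by (metis One_nat_def Suc_1 length_0_conv length_Suc_conv)
    then show False using hd la yz w unfolding walk_def by auto
  qed
  have "n \<noteq> 0" using ne unfolding n_def by simp
  then have n3: "n \<ge> 3" using n1 n2 by arith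
  have q0: "qs ! 0 = y" using hd ne by (simp add: hd_conv_nth)
  have ql: "qs ! (n - 1) = z" using la ne unfolding n_def by (simp add: last_conv_nth)
  have idx: "\<And>k. k < n \<Longrightarrow> qs ! k = y \<Longrightarrow> k = 0"
  proof -
    fix k assume "k < n" "qs ! k = y"
    then have "qs ! k = qs ! 0" using q0 by simp
    then show "k = 0" using nth_eq_iff_index_eq[OF d, of k 0] \<open>k < n\<close> n3 ne unfolding n_def by simp
  qed
  have idx2: "\<And>k. k < n \<Longrightarrow> qs ! k = z \<Longrightarrow> k = n - 1"
  proof -
    fix k assume "k < n" "qs ! k = z"
    then have "qs ! k = qs ! (n - 1)" using ql by simp
    then show "k = n - 1" using nth_eq_iff_index_eq[OF d, of k "n - 1"] \<open>k < n\<close> n3 ne unfolding n_def by simp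
  qed
  have xadj: "\<And>k. k < n \<Longrightarrow> E x (qs ! k) \<Longrightarrow> k = 0 \<or> k = n - 1"
    using xn idx idx2 unfolding n_def by (metis nth_mem)
  have len: "length (x # qs) = Suc n" unfolding n_def by simp
  show ?thesis unfolding induced_cycle_def len
  proof (intro conjI allI impI)
    show "4 \<le> Suc n" using n3 by simp
    show "distinct (x # qs)" using d x by simp
    show "set (x # qs) \<subseteq> V" using V by simp
  next
    fix i assume i: "i < Suc n"
    consider "i = 0" | "i = n" | "0 < i" "i < n" using i by linarith
    then show "E ((x # qs) ! i) ((x # qs) ! ((i + 1) mod Suc n))"
    proof cases
      case 1 then show ?thesis using n3 q0 x by simp
    next
      case 2
      have "E z x" using x(3) by (rule sym)
      then show ?thesis using 2 n3 ql
        by (cases n) auto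
    next
      case 3
      then have "Suc (i - 1) < length qs" unfolding n_def by simp
      then have "E (qs ! (i - 1)) (qs ! Suc (i - 1))" using w unfolding walk_def by blast
      then show ?thesis using 3 by (cases i) auto
    qed
  next
    fix i j assume i: "i < Suc n" and j: "j < Suc n" and e: "E ((x # qs) ! i) ((x # qs) ! j)"
    show "j = (i + 1) mod Suc n \<or> i = (j + 1) mod Suc n"
    proof (cases i)
      case 0
      then obtain j' where j': "j = Suc j'" using e irr by (cases j) auto
      then have "E x (qs ! j')" "j' < n" using e 0 j by auto
      then have "j' = 0 \<or> j' = n - 1" using xadj by blast
      then show ?thesis using 0 j' n3 by auto
    next
      case (Suc i')
      show ?thesis
      proof (cases j)
        case 0
        then have e1: "E (qs ! i') x" and "i' < n" using e Suc i by auto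
        have "E x (qs ! i')" using sym[OF e1] .
        then have "i' = 0 \<or> i' = n - 1" using xadj \<open>i' < n\<close> by blast
        then show ?thesis using 0 Suc n3 by auto
      next
        case (Suc j')
        then have "E (qs ! i') (qs ! j')" "i' < n" "j' < n" using e \<open>i = Suc i'\<close> i j by auto
        then have "j' = Suc i' \<or> i' = Suc j'" using cl unfolding n_def by blast
        then show ?thesis using Suc \<open>i = Suc i'\<close> i j by auto
      qed
    qed
  qed
qed



definition simplicial :: "'a set \<Rightarrow> ('a \<Rightarrow> 'a \<Rightarrow> bool) \<Rightarrow> 'a \<Rightarrow> bool" where
  "simplicial S E v \<longleftrightarrow> v \<in> S \<and> (\<forall>a\<in>S. \<forall>b\<in>S. E v a \<longrightarrow> E v b \<longrightarrow> a \<noteq> b \<longrightarrow> E a b)"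

lemma chordal_mono: "chordal S E \<Longrightarrow> T \<subseteq> S \<Longrightarrow> chordal T E"
  unfolding chordal_def induced_cycle_def by blast

lemma reach_walk:
  assumes "(\<lambda>a b. E a b \<and> a \<in> W \<and> b \<in> W)\<^sup>*\<^sup>* a b" "a \<in> W"
  shows "\<exists>ps. walk E ps \<and> ps \<noteq> [] \<and> hd ps = a \<and> last ps = b \<and> set ps \<subseteq> W"
  using assms
proof (induction rule: rtranclp_induct)
  case base
  then show ?case by (intro exI[of _ "[a]"]) (auto simp: walk_def)
next
  case (step b c)
  then obtain ps where ps: "walk E ps" "ps \<noteq> []" "hd ps = a" "last ps = b" "set ps \<subseteq> W" by blast
  have "walk E (ps @ [c])" using step(2) ps by (intro walk_snoc) auto
  then show ?case using ps step(2) by (intro exI[of _ "ps @ [c]"]) auto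
qed

lemma simplicial_aux:
  assumes irr: "\<And>a. \<not> E a a" and sym: "\<And>a b. E a b \<Longrightarrow> E b a"
  shows "finite S \<Longrightarrow> chordal S E \<Longrightarrow> x \<in> S \<Longrightarrow> w \<in> S \<Longrightarrow> w \<noteq> x \<Longrightarrow> \<not> E x w \<Longrightarrow>
         \<exists>v. simplicial S E v \<and> v \<noteq> x \<and> \<not> E x v"
proof (induction S arbitrary: x w rule: finite_psubset_induct)
  case (psubset S)
  have ex: "\<exists>v. simplicial T E v" if T: "T \<subset> S" "T \<noteq> {}" for T
  proof (cases "\<exists>a\<in>T. \<exists>b\<in>T. a \<noteq> b \<and> \<not> E a b")
    case True
    then obtain a b where ab: "a \<in> T" "b \<in> T" "a \<noteq> b" "\<not> E a b" by blast
    have "chordal T E" using chordal_mono[OF psubset(3)] T by blast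
    then show ?thesis using psubset(2)[OF T(1), of a b] ab by blast
  next
    case False
    then obtain v where "v \<in> T" using T by blast
    then show ?thesis using False unfolding simplicial_def by blast
  qed
  define W where "W = {u\<in>S. u \<noteq> x \<and> \<not> E x u}"
  define R where "R = (\<lambda>a b. E a b \<and> a \<in> W \<and> b \<in> W)"
  define C where "C = {u. R\<^sup>*\<^sup>* w u}"
  define N where "N = {s\<in>S. E x s \<and> (\<exists>c\<in>C. E s c)}"
  have wW: "w \<in> W" using psubset unfolding W_def by auto
  have CW: "C \<subseteq> W"
  proof
    fix u assume "u \<in> C"
    then have "R\<^sup>*\<^sup>* w u" unfolding C_def by simp
    then show "u \<in> W" using wW by (cases rule: rtranclp.cases) (auto simp: R_def)
  qed
  have wC: "w \<in> C" unfolding C_def by simp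
  have clos: "u \<in> C" if "c \<in> C" "u \<in> S" "E c u" "u \<noteq> x" "\<not> E x u" for c u
  proof -
    have "R c u" using that CW unfolding R_def W_def by auto
    then show ?thesis using that(1) unfolding C_def by (auto intro: rtranclp.rtrancl_into_rtrancl)
  qed
  have Rsym: "R\<inverse>\<inverse> = R" unfolding R_def by (auto intro!: ext intro: sym)
  have conn: "R\<^sup>*\<^sup>* a b" if "a \<in> C" "b \<in> C" for a b
  proof -
    have "R\<^sup>*\<^sup>* w a" "R\<^sup>*\<^sup>* w b" using that unfolding C_def by auto
    then have "R\<inverse>\<inverse>\<^sup>*\<^sup>* a w" using rtranclp_converseI by metis
    then have "R\<^sup>*\<^sup>* a w" using Rsym by simp
    then show ?thesis using \<open>R\<^sup>*\<^sup>* w b\<close> by (rule rtranclp_trans)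
  qed
  have xS: "x \<in> S" by (fact psubset(4))
  have WS: "W \<subseteq> S" unfolding W_def by auto
  have xW: "\<And>u. u \<in> W \<Longrightarrow> \<not> E x u" unfolding W_def by auto
  have Ncl: "E s t" if st: "s \<in> N" "t \<in> N" "s \<noteq> t" for s t
  proof (rule ccontr)
    assume nst: "\<not> E s t"
    obtain cs ct where c: "cs \<in> C" "ct \<in> C" "E s cs" "E t ct" using st unfolding N_def by blast
    have "R\<^sup>*\<^sup>* cs ct" using conn c by blast
    then obtain p where p: "walk E p" "p \<noteq> []" "hd p = cs" "last p = ct" "set p \<subseteq> W"
      using reach_walk[of E W cs ct] c CW unfolding R_def by blast
    define ps where "ps = s # p @ [t]"
    have "E ct t" using sym[OF c(4)] .
    then have "walk E (p @ [t])" using p by (intro walk_snoc) auto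
    then have wps: "walk E ps" unfolding ps_def using p c(3) by (intro walk_Cons) auto
    have hps: "ps \<noteq> []" "hd ps = s" "last ps = t" unfolding ps_def by auto
    obtain qs where qs: "walk E qs" "qs \<noteq> []" "hd qs = s" "last qs = t" "set qs \<subseteq> set ps" "distinct qs"
      "\<forall>i<length qs. \<forall>j<length qs. E (qs!i) (qs!j) \<longrightarrow> j = Suc i \<or> i = Suc j"
      using induced_path[OF irr sym wps hps] by blast
    have sps: "set ps \<subseteq> W \<union> {s, t}" using p unfolding ps_def by auto
    have xs: "E x s" "E x t" "s \<in> S" "t \<in> S" using st unfolding N_def by auto
    have xnot: "x \<notin> set qs" using qs(5) sps xs irr unfolding W_def by blast
    have xn: "\<forall>u\<in>set qs. E x u \<longrightarrow> u = s \<or> u = t" using qs(5) sps xW by blast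
    have V: "set qs \<subseteq> S" using qs(5) sps WS xs by blast
    have "induced_cycle S E (x # qs)"
      by (rule cycle_from_path[OF irr sym qs(1-4,6,7) st(3) nst xnot xs(1,2) xn V xS])
    then show False using psubset(3) unfolding chordal_def by blast
  qed
  define H where "H = C \<union> N"
  have HS: "H \<subset> S"
  proof -
    have "H \<subseteq> S" unfolding H_def N_def using CW WS by auto
    moreover have "x \<notin> H" unfolding H_def N_def using CW irr unfolding W_def by auto
    ultimately show ?thesis using xS by blast
  qed
  have CN: "C \<inter> N = {}" unfolding N_def using CW xW by blast
  have nbr: "u \<in> H" if "v \<in> C" "u \<in> S" "E v u" for v u
  proof -
    have "u \<noteq> x"
    proof
      assume "u = x"
      then have "E x v" using sym[OF that(3)] by simp
      then show False using xW that(1) CW by blast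
    qed
    show ?thesis
    proof (cases "E x u")
      case True
      have "E u v" using sym[OF that(3)] .
      then have "u \<in> N" unfolding N_def using True that by blast
      then show ?thesis unfolding H_def by blast
    next
      case False
      then show ?thesis using clos[OF that(1,2,3) \<open>u \<noteq> x\<close>] unfolding H_def by blast
    qed
  qed
  have vW: "v \<noteq> x \<and> \<not> E x v" if "v \<in> C" for v
    using that CW unfolding W_def by blast
  show ?case
  proof (cases "\<exists>s\<in>N. \<exists>c\<in>C. \<not> E s c")
    case True
    then obtain s c where sc: "s \<in> N" "c \<in> C" "\<not> E s c" by blast
    have "s \<noteq> c" using sc CN by blast
    have chH: "chordal H E" using chordal_mono[OF psubset(3)] HS by blast
    obtain v where v: "simplicial H E v" "v \<noteq> s" "\<not> E s v"
      using psubset(2)[OF HS chH, of s c] sc \<open>s \<noteq> c\<close> unfolding H_def by blast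
    have "v \<in> H" using v unfolding simplicial_def by blast
    moreover have "v \<notin> N" using Ncl v sc by blast
    ultimately have vC: "v \<in> C" unfolding H_def by blast
    have "simplicial S E v" unfolding simplicial_def
    proof (intro conjI ballI impI)
      show "v \<in> S" using vC CW WS by blast
    next
      fix a b assume ab: "a \<in> S" "b \<in> S" "E v a" "E v b" "a \<noteq> b"
      have "a \<in> H" "b \<in> H" using nbr[OF vC] ab by auto
      then show "E a b" using v(1) ab unfolding simplicial_def by blast
    qed
    then show ?thesis using vW[OF vC] by blast
  next
    case False
    have "C \<subset> S" using HS unfolding H_def by blast
    then obtain v where v: "simplicial C E v" using ex wC by blast
    then have vC: "v \<in> C" unfolding simplicial_def by blast
    have "simplicial S E v" unfolding simplicial_def
    proof (intro conjI ballI impI)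
      show "v \<in> S" using vC CW WS by blast
    next
      fix a b assume ab: "a \<in> S" "b \<in> S" "E v a" "E v b" "a \<noteq> b"
      have "a \<in> H" "b \<in> H" using nbr[OF vC] ab by auto
      then consider "a \<in> C" "b \<in> C" | "a \<in> N" "b \<in> N" | "a \<in> C" "b \<in> N" | "a \<in> N" "b \<in> C"
        unfolding H_def by blast
      then show "E a b"
      proof cases
        case 1 then show ?thesis using v ab unfolding simplicial_def by blast
      next
        case 2 then show ?thesis using Ncl ab by blast
      next
        case 3 then have "E b a" using False by blast
        then show ?thesis by (rule sym)
      next
        case 4 then show ?thesis using False by blast
      qed
    qed
    then show ?thesis using vW[OF vC] by blast
  qed
qed

lemma simplicial_exists:
  assumes irr: "\<And>a. \<not> E a a" and sym: "\<And>a b. E a b \<Longrightarrow> E b a"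
    and S: "finite S" "chordal S E" "S \<noteq> {}"
  shows "\<exists>v. simplicial S E v"
proof (cases "\<exists>a\<in>S. \<exists>b\<in>S. a \<noteq> b \<and> \<not> E a b")
  case True
  then obtain a b where ab: "a \<in> S" "b \<in> S" "a \<noteq> b" "\<not> E a b" by blast
  then show ?thesis using simplicial_aux[OF irr sym S(1,2), of a b] by blast
next
  case False
  then obtain v where "v \<in> S" using S by blast
  then show ?thesis using False unfolding simplicial_def by blast
qed



definition alt :: "'a set \<Rightarrow> nat \<Rightarrow> real" where
  "alt N m = (\<Sum>J\<in>Pow N. if m \<le> card J then (-1)^card J else 0)"

lemma sum_Pow_insert:
  assumes "finite N" "a \<notin> N"
  shows "(\<Sum>J\<in>Pow (insert a N). f J) = (\<Sum>J\<in>Pow N. f J) + (\<Sum>J\<in>Pow N. f (insert a J))"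
proof -
  have inj: "inj_on (insert a) (Pow N)"
    using assms(2) unfolding inj_on_def by (metis PowD insert_ident subsetD)
  have disj: "Pow N \<inter> insert a ` Pow N = {}" using assms(2) by auto
  have "(\<Sum>J\<in>Pow (insert a N). f J) = (\<Sum>J\<in>Pow N. f J) + (\<Sum>J\<in>insert a ` Pow N. f J)"
    unfolding Pow_insert using assms(1) disj by (intro sum.union_disjoint) auto
  also have "(\<Sum>J\<in>insert a ` Pow N. f J) = (\<Sum>J\<in>Pow N. f (insert a J))"
    using sum.reindex[OF inj] by simp
  finally show ?thesis .
qed

lemma alt_insert:
  assumes "finite N" "a \<notin> N"
  shows "alt (insert a N) m = alt N m - alt N (m - 1)"
proof -
  have "(\<Sum>J\<in>Pow N. (if m \<le> card (insert a J) then (-1::real)^card (insert a J) else 0))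
      = (\<Sum>J\<in>Pow N. - (if m - 1 \<le> card J then (-1)^card J else 0))"
  proof (rule sum.cong[OF refl])
    fix J assume "J \<in> Pow N"
    then have "card (insert a J) = Suc (card J)" using assms finite_subset by (metis PowD card_insert_disjoint subsetD)
    then show "(if m \<le> card (insert a J) then (-1::real)^card (insert a J) else 0)
      = - (if m - 1 \<le> card J then (-1)^card J else 0)" by auto
  qed
  moreover note sum_Pow_insert[OF assms, of "\<lambda>J. if m \<le> card J then (-1::real)^card J else 0"]
  ultimately show ?thesis unfolding alt_def by (simp add: sum_negf)
qed

lemma alt_nonneg: "finite N \<Longrightarrow> 0 \<le> (-1::real)^m * alt N m"
proof (induction N arbitrary: m rule: finite_induct)
  case empty
  then show ?case by (cases m) (simp_all add: alt_def)
next
  case (insert a N)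
  show ?case
  proof (cases m)
    case 0 then show ?thesis using alt_insert[OF insert(1,2)] by simp
  next
    case (Suc k)
    have e: "alt (insert a N) m = alt N m - alt N k" using alt_insert[OF insert(1,2), of m] Suc by simp
    have "(-1::real)^m = - ((-1)^k)" using Suc by simp
    then have "(-1::real)^m * alt (insert a N) m = (-1)^m * alt N m + (-1)^k * alt N k"
      unfolding e by (simp add: algebra_simps)
    then show ?thesis using insert(3)[of m] insert(3)[of k] by simp
  qed
qed

lemma alt_even_nonneg: "finite N \<Longrightarrow> 0 \<le> alt N (2 * r)"
  using alt_nonneg[of N "2 * r"] by simp

lemma cc_finite: "finite S \<Longrightarrow> finite (clique_complex S E)"
  unfolding clique_complex_def by (rule finite_subset[of _ "Pow S"]) auto

lemma cc_split:
  assumes irr: "\<And>a. \<not> E a a" and sym: "\<And>a b. E a b \<Longrightarrow> E b a" and v: "simplicial S E v"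
  shows "clique_complex S E = clique_complex (S - {v}) E \<union> insert v ` Pow {u\<in>S. E v u}"
proof
  show "clique_complex S E \<subseteq> clique_complex (S - {v}) E \<union> insert v ` Pow {u\<in>S. E v u}"
  proof
    fix I assume I: "I \<in> clique_complex S E"
    show "I \<in> clique_complex (S - {v}) E \<union> insert v ` Pow {u\<in>S. E v u}"
    proof (cases "v \<in> I")
      case True
      then have "I = insert v (I - {v})" by blast
      moreover have "I - {v} \<in> Pow {u\<in>S. E v u}" using I True unfolding clique_complex_def by auto
      ultimately show ?thesis by blast
    next
      case False then show ?thesis using I unfolding clique_complex_def by auto
    qed
  qed
next
  show "clique_complex (S - {v}) E \<union> insert v ` Pow {u\<in>S. E v u} \<subseteq> clique_complex S E"
  proof
    fix I assume "I \<in> clique_complex (S - {v}) E \<union> insert v ` Pow {u\<in>S. E v u}"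
    then consider "I \<in> clique_complex (S - {v}) E" | J where "J \<subseteq> {u\<in>S. E v u}" "I = insert v J" by blast
    then show "I \<in> clique_complex S E"
    proof cases
      case 1 then show ?thesis unfolding clique_complex_def by auto
    next
      case 2
      have vS: "v \<in> S" using v unfolding simplicial_def by blast
      show ?thesis unfolding clique_complex_def
      proof (intro CollectI conjI ballI impI)
        show "I \<subseteq> S" using 2 vS by auto
        show "I \<noteq> {}" using 2 by auto
      next
        fix a b assume ab: "a \<in> I" "b \<in> I" "a \<noteq> b"
        show "E a b"
        proof (cases "a = v")
          case True then show ?thesis using ab 2 by auto
        next
          case False
          show ?thesis
          proof (cases "b = v")
            case True
            then have "E b a" using ab 2 False by auto
            then show ?thesis by (rule sym)
          next
            case False
            then show ?thesis using \<open>a \<noteq> v\<close> ab 2 v unfolding simplicial_def by auto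
          qed
        qed
      qed
    qed
  qed
qed

lemma tail_nonneg:
  assumes irr: "\<And>a. \<not> E a a" and sym: "\<And>a b. E a b \<Longrightarrow> E b a"
  shows "finite S \<Longrightarrow> chordal S E \<Longrightarrow>
    0 \<le> (\<Sum>I\<in>clique_complex S E. if 2 * r < card I then (-1::real)^(card I - 1) else 0)"
proof (induction S rule: finite_psubset_induct)
  case (psubset S)
  show ?case
  proof (cases "S = {}")
    case True
    then have "clique_complex S E = {}" unfolding clique_complex_def by auto
    then show ?thesis by simp
  next
    case False
    obtain v where v: "simplicial S E v" using simplicial_exists[OF irr sym psubset(1,3) False] by blast
    define N where "N = {u\<in>S. E v u}"
    have vS: "v \<in> S" using v unfolding simplicial_def by blast
    have S': "S - {v} \<subset> S" using vS by blast
    have IH: "0 \<le> (\<Sum>I\<in>clique_complex (S - {v}) E. if 2 * r < card I then (-1::real)^(card I - 1) else 0)"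
      using psubset(2)[OF S'] chordal_mono[OF psubset(3)] by blast
    have fN: "finite N" using psubset(1) unfolding N_def by simp
    have vN: "v \<notin> N" using irr unfolding N_def by blast
    have inj: "inj_on (insert v) (Pow N)"
      using vN unfolding inj_on_def by (metis PowD insert_ident subsetD)
    have disj: "clique_complex (S - {v}) E \<inter> insert v ` Pow N = {}"
      unfolding clique_complex_def by auto
    have cs: "clique_complex S E = clique_complex (S - {v}) E \<union> insert v ` Pow N"
      using cc_split[OF irr sym v] unfolding N_def .
    let ?t = "\<lambda>I. if 2 * r < card I then (-1::real)^(card I - 1) else 0"
    have "(\<Sum>I\<in>clique_complex S E. ?t I) = (\<Sum>I\<in>clique_complex (S - {v}) E. ?t I) + (\<Sum>I\<in>insert v ` Pow N. ?t I)"
      unfolding cs using disj fN psubset(1) by (intro sum.union_disjoint) (auto intro: cc_finite)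
    also have "(\<Sum>I\<in>insert v ` Pow N. ?t I) = (\<Sum>J\<in>Pow N. ?t (insert v J))"
      using sum.reindex[OF inj] by simp
    also have "\<dots> = alt N (2 * r)" unfolding alt_def
    proof (rule sum.cong[OF refl])
      fix J assume "J \<in> Pow N"
      then have "card (insert v J) = Suc (card J)" using fN vN finite_subset by (metis PowD card_insert_disjoint subsetD)
      then show "?t (insert v J) = (if 2 * r \<le> card J then (-1)^card J else 0)" by auto
    qed
    finally show ?thesis using IH alt_even_nonneg[OF fN, of r] by linarith
  qed
qed



theorem theorem2:
  fixes V :: "'a set" and E :: "'a \<Rightarrow> 'a \<Rightarrow> bool"
    and M :: "'b measure" and A :: "'a \<Rightarrow> 'b set" and r :: nat
  assumes "simple_graph V E" and "V \<noteq> {}" and "chordal V E"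
    and "prob_space M" and "\<And>v. v \<in> V \<Longrightarrow> A v \<in> sets M"
    and "r \<ge> 1"
  shows "(\<Sum>I\<in>clique_complex V E. (-1::real) ^ (card I - 1) * measure M (\<Inter>i\<in>I. A i))
     \<ge> (\<Sum>I\<in>{I\<in>clique_complex V E. card I \<le> 2 * r}.
           (-1::real) ^ (card I - 1) * measure M (\<Inter>i\<in>I. A i))"
proof -
  have fV: "finite V" and irr: "\<And>a. \<not> E a a" and sym: "\<And>a b. E a b \<Longrightarrow> E b a"
    using assms(1) unfolding simple_graph_def by auto
  interpret P: prob_space M by (fact assms(4))
  define X where "X = clique_complex V E"
  have fX: "finite X" unfolding X_def using cc_finite[OF fV] .
  define B where "B = (\<lambda>I. \<Inter>i\<in>I. A i)"
  define f where "f = (\<lambda>I. (-1::real) ^ (card I - 1) * measure M (B I))"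
  define c :: "'a set \<Rightarrow> real" where "c = (\<lambda>I. if 2 * r < card I then (-1::real) ^ (card I - 1) else 0)"
  have XV: "\<And>I. I \<in> X \<Longrightarrow> I \<subseteq> V \<and> I \<noteq> {}" unfolding X_def clique_complex_def by auto
  have Bsets: "B I \<in> sets M" if "I \<in> X" for I
  proof -
    have "finite I" "I \<noteq> {}" "I \<subseteq> V" using XV[OF that] fV finite_subset by auto
    then show ?thesis unfolding B_def using assms(5) by (intro sets.finite_INT) auto
  qed
  have intg: "integrable M (\<lambda>\<omega>. c I * indicator (B I) \<omega>)" if "I \<in> X" for I
  proof (intro integrable_mult_right)
    show "integrable M (indicat_real (B I))"
      using Bsets[OF that] P.emeasure_finite[of "B I"] by (intro integrable_real_indicator) (auto simp: less_top[symmetric])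
  qed
  have split: "(\<Sum>I\<in>X. f I) = (\<Sum>I\<in>X. if card I \<le> 2 * r then f I else 0) + (\<Sum>I\<in>X. c I * measure M (B I))"
    unfolding sum.distrib[symmetric] by (rule sum.cong) (auto simp: c_def f_def)
  have "(\<Sum>I\<in>X. c I * measure M (B I)) = (\<Sum>I\<in>X. integral\<^sup>L M (\<lambda>\<omega>. c I * indicator (B I) \<omega>))"
  proof (rule sum.cong[OF refl])
    fix I assume I: "I \<in> X"
    have "B I \<subseteq> space M" using sets.sets_into_space[OF Bsets[OF I]] .
    then have "B I \<inter> space M = B I" by blast
    then show "c I * measure M (B I) = integral\<^sup>L M (\<lambda>\<omega>. c I * indicator (B I) \<omega>)"
      by simp
  qed
  also have "\<dots> = integral\<^sup>L M (\<lambda>\<omega>. \<Sum>I\<in>X. c I * indicator (B I) \<omega>)"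
    using Bochner_Integration.integral_sum[where I=X and f="\<lambda>I \<omega>. c I * indicator (B I) \<omega>"] intg by simp
  also have "\<dots> \<ge> 0"
  proof (rule integral_nonneg_AE, rule AE_I2)
    fix \<omega>
    define S where "S = {v\<in>V. \<omega> \<in> A v}"
    have ccS: "clique_complex S E = {I\<in>X. I \<subseteq> S}"
      unfolding X_def S_def clique_complex_def by auto
    have "(\<Sum>I\<in>X. c I * indicator (B I) \<omega>) = (\<Sum>I\<in>X. if I \<subseteq> S then c I else 0)"
    proof (rule sum.cong[OF refl])
      fix I assume I: "I \<in> X"
      have "\<omega> \<in> B I \<longleftrightarrow> I \<subseteq> S" using XV[OF I] unfolding B_def S_def by blast
      then show "c I * indicator (B I) \<omega> = (if I \<subseteq> S then c I else 0)" by (auto simp: indicator_def)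
    qed
    also have "\<dots> = (\<Sum>I\<in>clique_complex S E. c I)"
      unfolding ccS by (rule sum.inter_filter[OF fX, symmetric])
    also have "\<dots> \<ge> 0"
    proof -
      have fS: "finite S" using fV unfolding S_def by simp
      have SV: "S \<subseteq> V" unfolding S_def by blast
      have chS: "chordal S E" using chordal_mono[OF assms(3) SV] .
      show ?thesis unfolding c_def using tail_nonneg[OF irr sym fS chS, where r=r] .
    qed
    finally show "0 \<le> (\<Sum>I\<in>X. c I * indicator (B I) \<omega>)" .
  qed
  finally have "0 \<le> (\<Sum>I\<in>X. c I * measure M (B I))" .
  moreover have "(\<Sum>I\<in>{I\<in>X. card I \<le> 2 * r}. f I) = (\<Sum>I\<in>X. if card I \<le> 2 * r then f I else 0)"
    by (rule sum.inter_filter[OF fX])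
  ultimately show ?thesis using split unfolding X_def[symmetric] f_def B_def by linarith
qed

end
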